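(* For every integer $k \geq 1$, let $\mathcal{B}(k)$ denote the greatest common divisor of all the sums $\sum_{i=1}^{k} B_{n+i}$, $n \geq 0$. Then $$\mathcal{B}(k) = \begin{cases} \tfrac{1}{2}P_{k}, & \text{if } k \text{ is even};\\ Q_{k}, & \text{if } k \text{ is odd}.\end{cases}$$
   Context: The Pell sequence $(P_n)_{n\ge0}$ is defined by $P_0=0$, $P_1=1$, $P_n = 2P_{n-1}+P_{n-2}$. The associated Pell sequence $(Q_n)_{n\ge0}$ is defined by $Q_0=1$, $Q_1=1$, $Q_n=2Q_{n-1}+Q_{n-2}$. The balancing sequence $(B_n)_{n\ge0}$ is defined by $B_0=0$, $B_1=1$, $B_n=6B_{n-1}-B_{n-2}$. *)

theory Defs
  imports Main
begin

fun pell :: "nat \<Rightarrow> int" where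
  "pell 0 = 0"
| "pell (Suc 0) = 1"
| "pell (Suc (Suc n)) = 2 * pell (Suc n) + pell n"

fun assoc_pell :: "nat \<Rightarrow> int" where
  "assoc_pell 0 = 1"
| "assoc_pell (Suc 0) = 1"
| "assoc_pell (Suc (Suc n)) = 2 * assoc_pell (Suc n) + assoc_pell n"

fun balancing :: "nat \<Rightarrow> int" where
  "balancing 0 = 0"
| "balancing (Suc 0) = 1"
| "balancing (Suc (Suc n)) = 6 * balancing (Suc n) - balancing n"

definition balancing_gcd :: "nat \<Rightarrow> int" where
  "balancing_gcd k = Gcd {(\<Sum>i=1..k. balancing (n + i)) | n. n \<ge> 0}"

end

theory Submission
  imports Defs
begin

abbreviation B where "B \<equiv> balancing"

lemma B_add: "B (n + j + 1) = B (n+1) * B (j+1) - B n * B j"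
proof (induction j rule: balancing.induct)
  case 1 then show ?case by simp
next
  case 2 then show ?case by (simp add: numeral_eq_Suc)
next
  case (3 j)
  have e: "n + Suc (Suc j) + 1 = Suc (Suc (n + j + 1))" by simp
  have e2: "n + Suc j + 1 = Suc (n + j + 1)" by simp
  show ?case
    unfolding e balancing.simps(3)
    using 3 e2 by (simp add: algebra_simps)
qed

lemma B_rec: "B (n+2) = 6 * B (n+1) - B n"
  by (simp add: numeral_eq_Suc)

lemma B_nonneg: "0 \<le> B n \<and> B n \<le> B (n+1)"
  by (induction n) (auto simp: B_rec[simplified numeral_eq_Suc, simplified])

lemma B_even: "B (2*m+2) = B (m+1) * (B (m+2) - B m)"
proof -
  have e: "2*m+2 = m + (m+1) + 1" by simp
  have "B (2*m+2) = B (m + (m+1) + 1)" by (simp only: e)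
  also have "\<dots> = B (m+1) * (B (m+2) - B m)"
    using B_add[of m "m+1"] B_rec[of m] by (simp add: algebra_simps)
  finally show ?thesis .
qed

lemma B_odd: "B (2*m+1) = (B m + B (m+1)) * (B (m+1) - B m)"
proof -
  have e: "2*m+1 = m + m + 1" by simp
  have "B (2*m+1) = B (m + m + 1)" by (simp only: e)
  also have "\<dots> = (B m + B (m+1)) * (B (m+1) - B m)"
    using B_add[of m m] by (simp add: algebra_simps)
  finally show ?thesis .
qed

lemma sum_form:
  "(\<Sum>i=1..2*m. B i) = B m * (B m + B (m+1)) \<and>
   (\<Sum>i=1..2*m+1. B i) = (B m + B (m+1)) * B (m+1)"
proof (induction m)
  case 0 then show ?case by simp
next
  case (Suc m)
  have a: "(\<Sum>i=1..2*Suc m. B i) = (\<Sum>i=1..2*m+1. B i) + B (2*m+2)"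
    by (simp add: sum.atLeast1_atMost_eq)
  have a1: "(\<Sum>i=1..2*Suc m. B i) = B (m+1) * (B (m+1) + B (m+2))"
    unfolding a using Suc B_even[of m] by (simp add: algebra_simps)
  have b: "(\<Sum>i=1..2*Suc m+1. B i) = (\<Sum>i=1..2*Suc m. B i) + B (2*(m+1)+1)"
    by simp
  have b1: "(\<Sum>i=1..2*Suc m+1. B i) = (B (m+1) + B (m+2)) * B (m+2)"
    unfolding b a1 using B_odd[of "m+1"] by (simp add: algebra_simps)
  show ?case using a1 b1 by (simp add: numeral_eq_Suc)
qed

lemma shift_sum:
  "(\<Sum>i=1..k. B (n+i)) = B (n+1) * (\<Sum>i=1..k. B i) - B n * ((\<Sum>i=1..k. B i) - B k)"
proof (induction k)
  case 0 then show ?case by simp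
next
  case (Suc k)
  have "B (n + Suc k) = B (n+1) * B (k+1) - B n * B k" using B_add[of n k] by simp
  then show ?case using Suc by (simp add: algebra_simps)
qed

lemma B_coprime: "gcd (B n) (B (n+1)) = 1"
proof (induction n)
  case 0 then show ?case by simp
next
  case (Suc n)
  have "gcd (B (n+1)) (B (n+2)) = gcd (B (n+1)) (6 * B (n+1) - B n)" by (simp add: B_rec)
  also have "\<dots> = gcd (B (n+1)) (- B n)"
    by (metis add.commute diff_conv_add_uminus gcd_add_mult)
  also have "\<dots> = 1" using Suc by (simp add: gcd.commute)
  finally show ?case by simp
qed

lemma c_coprime: "gcd (B n + B (n+1)) (B (n+1) + B (n+2)) = 1"
proof (induction n)
  case 0 then show ?case by (simp add: numeral_eq_Suc)
next
  case (Suc n)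
  have "gcd (B (n+1) + B (n+2)) (B (n+2) + B (n+3)) =
        gcd (B (n+1) + B (n+2)) (6 * (B (n+1) + B (n+2)) - (B n + B (n+1)))"
    using B_rec[of n] B_rec[of "n+1"] by (simp add: algebra_simps numeral_eq_Suc)
  also have "\<dots> = gcd (B (n+1) + B (n+2)) (- (B n + B (n+1)))"
    by (metis add.commute diff_conv_add_uminus gcd_add_mult)
  also have "\<dots> = gcd (B (n+1) + B (n+2)) (B n + B (n+1))" by (simp only: gcd_neg2)
  also have "\<dots> = 1" using Suc by (simp only: gcd.commute)
  finally show ?case by (simp add: numeral_eq_Suc)
qed

lemma pell_B: "pell (2*m) = 2 * B m \<and> pell (2*m+1) = B (m+1) - B m"
proof (induction m)
  case 0 then show ?case by simp
next
  case (Suc m)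
  have e1: "2 * Suc m = Suc (Suc (2*m))" by simp
  have e2: "2 * Suc m + 1 = Suc (Suc (2*m+1))" by simp
  have p1: "pell (2 * Suc m) = 2 * B (m+1)"
    unfolding e1 pell.simps using Suc by simp
  have p2: "pell (2 * Suc m + 1) = B (m+2) - B (m+1)"
    unfolding e2 pell.simps using Suc p1 B_rec[of m] by (simp add: algebra_simps)
  show ?case using p1 p2 by (simp add: numeral_eq_Suc)
qed

lemma qpell_B: "assoc_pell (2*m+1) = B m + B (m+1) \<and> assoc_pell (2*m+2) = 3 * B (m+1) - B m"
proof (induction m)
  case 0 then show ?case by (simp add: numeral_eq_Suc)
next
  case (Suc m)
  have e1: "2 * Suc m + 1 = Suc (Suc (2*m+1))" by simp
  have e2: "2 * Suc m + 2 = Suc (Suc (2*m+2))" by simp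
  have p1: "assoc_pell (2 * Suc m + 1) = B (m+1) + B (m+2)"
    unfolding e1 assoc_pell.simps using Suc B_rec[of m]
    by (simp add: algebra_simps numeral_eq_Suc)
  have p2: "assoc_pell (2 * Suc m + 2) = 3 * B (m+2) - B (m+1)"
    unfolding e2 assoc_pell.simps using Suc p1 B_rec[of m]
    by (simp add: algebra_simps numeral_eq_Suc)
  show ?case using p1 p2 by (simp add: numeral_eq_Suc)
qed

lemma gcd_reduce: "balancing_gcd k = gcd (\<Sum>i=1..k. B i) (B k)"
proof -
  define A where "A = (\<Sum>i=1..k. B i)"
  let ?T = "{(\<Sum>i=1..k. balancing (n + i)) | n. n \<ge> 0}"
  have S: "(\<Sum>i=1..k. B (n+i)) = B (n+1) * A - B n * (A - B k)" for n
    using shift_sum A_def by simp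
  have "Gcd ?T = gcd A (B k)"
  proof (rule Gcd_eqI)
    show "normalize (gcd A (B k)) = gcd A (B k)" by simp
    show "gcd A (B k) dvd b" if "b \<in> ?T" for b
      using that S by auto
    show "c dvd gcd A (B k)" if h: "\<And>b. b \<in> ?T \<Longrightarrow> c dvd b" for c
    proof -
      have "c dvd (\<Sum>i=1..k. B (0+i))" by (rule h) blast
      hence cA: "c dvd A" using S[of 0] by simp
      have "c dvd (\<Sum>i=1..k. B (1+i))" by (rule h) blast
      hence "c dvd 5 * A + B k" using S[of 1] by (simp add: numeral_eq_Suc algebra_simps)
      hence "c dvd B k" using cA by (metis dvd_add_right_iff dvd_mult)
      then show ?thesis using cA by simp
    qed
  qed
  then show ?thesis unfolding balancing_gcd_def A_def .
qed

lemma gcd_xy: "gcd (x::int) (x - y) = gcd x y"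
  by (metis gcd.commute gcd_diff2)

theorem theorem17:
  fixes k :: nat
  assumes "k \<ge> 1"
  shows "balancing_gcd k = (if even k then pell k div 2 else assoc_pell k)"
proof (cases "even k")
  case True
  define p where "p = k div 2 - 1"
  have k: "k = 2*p+2" using True assms unfolding p_def by presburger
  have A: "(\<Sum>i=1..k. B i) = B (p+1) * (B (p+1) + B (p+2))"
    using sum_form[of "p+1"] k by (simp add: numeral_eq_Suc algebra_simps)
  have Bk: "B k = B (p+1) * (B (p+2) - B p)" using B_even[of p] k by simp
  have "gcd (B (p+1) + B (p+2)) (B (p+2) - B p) =
        gcd (B (p+1) + B (p+2)) ((B (p+1) + B (p+2)) - (B p + B (p+1)))"
    by (simp add: algebra_simps)
  also have "\<dots> = gcd (B (p+1) + B (p+2)) (B p + B (p+1))" by (rule gcd_xy)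
  also have "\<dots> = 1" using c_coprime[of p] by (metis gcd.commute)
  finally have g1: "gcd (B (p+1) + B (p+2)) (B (p+2) - B p) = 1" .
  have "gcd (\<Sum>i=1..k. B i) (B k) = \<bar>B (p+1)\<bar> * gcd (B (p+1) + B (p+2)) (B (p+2) - B p)"
    unfolding A Bk by (simp add: gcd_mult_left abs_mult)
  also have "\<dots> = B (p+1)" using g1 B_nonneg[of "p+1"] by simp
  finally have G: "balancing_gcd k = B (p+1)" using gcd_reduce by simp
  have "pell k = 2 * B (p+1)" using pell_B[of "p+1"] k by simp
  then show ?thesis using G True by simp
next
  case False
  then obtain m where k: "k = 2*m+1" using oddE by blast
  have A: "(\<Sum>i=1..k. B i) = (B m + B (m+1)) * B (m+1)" using conjunct2[OF sum_form[of m]] k by (simp only:)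
  have Bk: "B k = (B m + B (m+1)) * (B (m+1) - B m)" using B_odd k by simp
  have g1: "gcd (B (m+1)) (B (m+1) - B m) = 1"
    using gcd_xy[of "B (m+1)" "B m"] B_coprime[of m] by (metis gcd.commute)
  have "gcd (\<Sum>i=1..k. B i) (B k) = \<bar>B m + B (m+1)\<bar> * gcd (B (m+1)) (B (m+1) - B m)"
    unfolding A Bk by (simp add: gcd_mult_left abs_mult)
  also have "\<dots> = B m + B (m+1)" using g1 B_nonneg[of m] B_nonneg[of "m+1"] by simp
  finally have G: "balancing_gcd k = B m + B (m+1)" using gcd_reduce by simp
  then show ?thesis using qpell_B[of m] k False by simp
qed

end
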